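(* Let $G$ be a finite nilpotent group of nilpotency class $2$ and let $w\in F_k$ be such that the word map $w:G^k\to G$ is surjective. Then $w$ is $F_k(G)$-automorphic to the word $x_1$, and $P_{w,G}(g)=|G|^{-1}$ for every $g\in G$; in particular $w$ satisfies the Amit–Ashurst bound $P_{w,G}(g)\ge|G|^{-1}$ for all $g\in G$.
   Context: $F_k$ is the free group on $x_1,\dots,x_k$; $P_{w,G}(g):=|\{(g_1,\dots,g_k)\in G^k: w(g_1,\dots,g_k)=g\}|/|G|^k$. The group $F_k(G)$ consists of the word maps $G^k\to G$ induced by elements of $F_k$, under pointwise multiplication; $w_1,w_2\in F_k$ are $F_k(G)$-automorphic if some group automorphism of $F_k(G)$ sends the word map of $w_1$ to that of $w_2$. *)

theory Defs
  imports "HOL-Algebra.Algebra"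
begin

text \<open>Elements of the free group F_k on x_1,...,x_k are represented by words:
  lists of letters (i, b) with i < k, where (i, True) stands for x_(i+1) and
  (i, False) for its inverse. Word maps only depend on the group element
  (free reduction does not change the induced map).\<close>

type_synonym letter = "nat \<times> bool"

definition words :: "nat \<Rightarrow> letter list set" where
  "words k = {w. \<forall>l \<in> set w. fst l < k}"

definition gen1 :: "letter list" where
  "gen1 = [(0, True)]"

definition tuples :: "('a, 'b) monoid_scheme \<Rightarrow> nat \<Rightarrow> (nat \<Rightarrow> 'a) set" where
  "tuples G k = {0..<k} \<rightarrow>\<^sub>E carrier G"

fun eval_word :: "('a, 'b) monoid_scheme \<Rightarrow> letter list \<Rightarrow> (nat \<Rightarrow> 'a) \<Rightarrow> 'a" where
  "eval_word G [] g = \<one>\<^bsub>G\<^esub>"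
| "eval_word G ((i, b) # w) g =
     (if b then g i else inv\<^bsub>G\<^esub> (g i)) \<otimes>\<^bsub>G\<^esub> eval_word G w g"

definition word_map :: "('a, 'b) monoid_scheme \<Rightarrow> nat \<Rightarrow> letter list \<Rightarrow> (nat \<Rightarrow> 'a) \<Rightarrow> 'a" where
  "word_map G k w = (\<lambda>g \<in> tuples G k. eval_word G w g)"

definition word_map_group :: "('a, 'b) monoid_scheme \<Rightarrow> nat \<Rightarrow> ((nat \<Rightarrow> 'a) \<Rightarrow> 'a) monoid" where
  "word_map_group G k =
     \<lparr> carrier = word_map G k ` words k,
       monoid.mult = (\<lambda>f h. \<lambda>g \<in> tuples G k. f g \<otimes>\<^bsub>G\<^esub> h g),
       one = (\<lambda>g \<in> tuples G k. \<one>\<^bsub>G\<^esub>) \<rparr>"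

definition automorphic :: "('a, 'b) monoid_scheme \<Rightarrow> nat \<Rightarrow> letter list \<Rightarrow> letter list \<Rightarrow> bool" where
  "automorphic G k w1 w2 \<longleftrightarrow>
     (\<exists>\<phi> \<in> iso (word_map_group G k) (word_map_group G k).
        \<phi> (word_map G k w1) = word_map G k w2)"

definition word_prob :: "('a, 'b) monoid_scheme \<Rightarrow> nat \<Rightarrow> letter list \<Rightarrow> 'a \<Rightarrow> real" where
  "word_prob G k w x =
     real (card {g \<in> tuples G k. eval_word G w g = x}) / real (card (carrier G) ^ k)"

definition word_map_surjective :: "('a, 'b) monoid_scheme \<Rightarrow> nat \<Rightarrow> letter list \<Rightarrow> bool" where
  "word_map_surjective G k w \<longleftrightarrow> eval_word G w ` tuples G k = carrier G"

definition commutator :: "('a, 'b) monoid_scheme \<Rightarrow> 'a \<Rightarrow> 'a \<Rightarrow> 'a" where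
  "commutator G x y = inv\<^bsub>G\<^esub> x \<otimes>\<^bsub>G\<^esub> inv\<^bsub>G\<^esub> y \<otimes>\<^bsub>G\<^esub> x \<otimes>\<^bsub>G\<^esub> y"

text \<open>Nilpotent of class exactly 2: non-abelian, and [G,G] \<le> Z(G)
  (equivalently \<gamma>_3(G) = 1, since G' is generated by commutators).\<close>
definition nilpotent_class_2 :: "('a, 'b) monoid_scheme \<Rightarrow> bool" where
  "nilpotent_class_2 G \<longleftrightarrow> group G \<and>
     (\<exists>x \<in> carrier G. \<exists>y \<in> carrier G. x \<otimes>\<^bsub>G\<^esub> y \<noteq> y \<otimes>\<^bsub>G\<^esub> x) \<and>
     (\<forall>x \<in> carrier G. \<forall>y \<in> carrier G. \<forall>z \<in> carrier G.
        commutator G x y \<otimes>\<^bsub>G\<^esub> z = z \<otimes>\<^bsub>G\<^esub> commutator G x y)"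

end

theory Submission
  imports Defs
begin



locale c2 = group G for G (structure) +
  assumes cc: "\<And>x y z. x \<in> carrier G \<Longrightarrow> y \<in> carrier G \<Longrightarrow> z \<in> carrier G \<Longrightarrow>
     commutator G x y \<otimes> z = z \<otimes> commutator G x y"
begin

lemma canc1[simp]: "x \<in> carrier G \<Longrightarrow> y \<in> carrier G \<Longrightarrow> x \<otimes> (inv x \<otimes> y) = y"
  by (simp flip: m_assoc)
lemma canc2[simp]: "x \<in> carrier G \<Longrightarrow> y \<in> carrier G \<Longrightarrow> inv x \<otimes> (x \<otimes> y) = y"
  by (simp flip: m_assoc)

abbreviation cm ("\<lbrakk>_,_\<rbrakk>") where "cm x y \<equiv> commutator G x y"

lemma cm_closed[simp]: "x \<in> carrier G \<Longrightarrow> y \<in> carrier G \<Longrightarrow> \<lbrakk>x,y\<rbrakk> \<in> carrier G"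
  by (simp add: commutator_def)

lemma cm_conj: "u \<in> carrier G \<Longrightarrow> v \<in> carrier G \<Longrightarrow> inv u \<otimes> v \<otimes> u = v \<otimes> \<lbrakk>v,u\<rbrakk>"
  by (simp add: commutator_def m_assoc flip: m_assoc[of v "inv v"])

lemma cm_one_left[simp]: "c \<in> carrier G \<Longrightarrow> \<lbrakk>\<one>,c\<rbrakk> = \<one>"
  by (simp add: commutator_def m_assoc)
lemma cm_one_right[simp]: "c \<in> carrier G \<Longrightarrow> \<lbrakk>c,\<one>\<rbrakk> = \<one>"
  by (simp add: commutator_def m_assoc)

lemma cm_mult_left:
  assumes a: "a \<in> carrier G" and b: "b \<in> carrier G" and c: "c \<in> carrier G"
  shows "\<lbrakk>a \<otimes> b, c\<rbrakk> = \<lbrakk>a,c\<rbrakk> \<otimes> \<lbrakk>b,c\<rbrakk>"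
proof -
  have "\<lbrakk>a \<otimes> b, c\<rbrakk> = inv b \<otimes> \<lbrakk>a,c\<rbrakk> \<otimes> b \<otimes> \<lbrakk>b,c\<rbrakk>"
    using a b c by (simp add: commutator_def m_assoc inv_mult_group flip: m_assoc[of c "inv c"])
  also have "inv b \<otimes> \<lbrakk>a,c\<rbrakk> \<otimes> b = \<lbrakk>a,c\<rbrakk>"
  proof -
    have "\<lbrakk>a,c\<rbrakk> \<otimes> b = b \<otimes> \<lbrakk>a,c\<rbrakk>" using a b c by (simp add: cc)
    thus ?thesis using a b c by (simp add: m_assoc l_cancel_one')
  qed
  finally show ?thesis .
qed

lemma cm_swap: "a \<in> carrier G \<Longrightarrow> b \<in> carrier G \<Longrightarrow> inv \<lbrakk>a,b\<rbrakk> = \<lbrakk>b,a\<rbrakk>"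
  by (simp add: commutator_def inv_mult_group m_assoc)

lemma cm_mult_right:
  assumes a: "a \<in> carrier G" and b: "b \<in> carrier G" and c: "c \<in> carrier G"
  shows "\<lbrakk>c, a \<otimes> b\<rbrakk> = \<lbrakk>c,a\<rbrakk> \<otimes> \<lbrakk>c,b\<rbrakk>"
proof -
  have "\<lbrakk>c, a \<otimes> b\<rbrakk> = inv \<lbrakk>a \<otimes> b, c\<rbrakk>" using a b c by (simp add: cm_swap)
  also have "\<dots> = inv (\<lbrakk>a,c\<rbrakk> \<otimes> \<lbrakk>b,c\<rbrakk>)" using a b c by (simp add: cm_mult_left)
  also have "\<dots> = inv \<lbrakk>b,c\<rbrakk> \<otimes> inv \<lbrakk>a,c\<rbrakk>" using a b c by (simp add: inv_mult_group)
  also have "\<dots> = \<lbrakk>c,a\<rbrakk> \<otimes> \<lbrakk>c,b\<rbrakk>" using a b c cc[of c b "\<lbrakk>c,a\<rbrakk>"] by (simp add: cm_swap)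
  finally show ?thesis .
qed

lemma cm_inv_left:
  assumes a: "a \<in> carrier G" and c: "c \<in> carrier G"
  shows "\<lbrakk>inv a, c\<rbrakk> = inv \<lbrakk>a,c\<rbrakk>"
proof -
  have "\<lbrakk>inv a, c\<rbrakk> \<otimes> \<lbrakk>a,c\<rbrakk> = \<one>"
    using a c cm_mult_left[of "inv a" a c] by simp
  thus ?thesis using a c by (simp add: inv_equality)
qed

lemma cm_pow_left_nat:
  assumes a: "a \<in> carrier G" and c: "c \<in> carrier G"
  shows "\<lbrakk>a [^] (n::nat), c\<rbrakk> = \<lbrakk>a,c\<rbrakk> [^] n"
proof (induction n)
  case 0 then show ?case using c by simp
next
  case (Suc n)
  have "\<lbrakk>a [^] Suc n, c\<rbrakk> = \<lbrakk>a [^] n \<otimes> a, c\<rbrakk>" by simp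
  also have "\<dots> = \<lbrakk>a [^] n, c\<rbrakk> \<otimes> \<lbrakk>a,c\<rbrakk>" using a c by (simp add: cm_mult_left)
  finally show ?case using Suc by simp
qed

lemma cm_pow_left:
  assumes a: "a \<in> carrier G" and c: "c \<in> carrier G"
  shows "\<lbrakk>a [^] (n::int), c\<rbrakk> = \<lbrakk>a,c\<rbrakk> [^] n"
proof (cases "n \<ge> 0")
  case True
  then obtain m where "n = int m" by (metis nonneg_eq_int)
  then show ?thesis using a c by (simp add: int_pow_int cm_pow_left_nat)
next
  case False
  then obtain m where "n = - int m" by (metis neg_0_le_iff_le nonneg_eq_int linorder_le_cases minus_minus)
  then show ?thesis using a c
    by (simp add: int_pow_neg int_pow_int cm_pow_left_nat cm_inv_left nat_pow_inv)
qed

lemma cm_pow_right: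
  assumes a: "a \<in> carrier G" and c: "c \<in> carrier G"
  shows "\<lbrakk>c, a [^] (n::int)\<rbrakk> = \<lbrakk>c,a\<rbrakk> [^] n"
proof -
  have "\<lbrakk>c, a [^] n\<rbrakk> = inv \<lbrakk>a [^] n, c\<rbrakk>" using a c by (simp add: cm_swap)
  also have "\<dots> = inv (\<lbrakk>a,c\<rbrakk> [^] n)" using a c by (simp add: cm_pow_left)
  also have "\<dots> = (inv \<lbrakk>a,c\<rbrakk>) [^] n" using a c by (simp add: int_pow_inv)
  finally show ?thesis using a c by (simp add: cm_swap)
qed

lemma cm_pow_swap:
  assumes "a \<in> carrier G" "c \<in> carrier G"
  shows "\<lbrakk>a [^] (n::int), c\<rbrakk> = \<lbrakk>a, c [^] n\<rbrakk>"
  using assms by (simp add: cm_pow_left cm_pow_right)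

end



definition wsum :: "(nat \<Rightarrow> int) \<Rightarrow> letter list \<Rightarrow> int" where
  "wsum c w = sum_list (map (\<lambda>(i,b). if b then c i else - c i) w)"

lemma wsum_Nil[simp]: "wsum c [] = 0" by (simp add: wsum_def)
lemma wsum_Cons[simp]: "wsum c ((i,b)#w) = (if b then c i else - c i) + wsum c w"
  by (simp add: wsum_def)

lemma words_Cons[simp]: "((i,b)#w) \<in> words k \<longleftrightarrow> i < k \<and> w \<in> words k"
  by (auto simp: words_def)

lemma tuples_carrier: "h \<in> tuples G k \<Longrightarrow> i < k \<Longrightarrow> h i \<in> carrier G"
  by (auto simp: tuples_def PiE_def)

context c2 begin

lemma eval_closed[simp]: "w \<in> words k \<Longrightarrow> (\<And>i. i < k \<Longrightarrow> h i \<in> carrier G) \<Longrightarrow> eval_word G w h \<in> carrier G"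
  by (induction w) auto

lemma key:
  assumes y: "y \<in> carrier G" and V: "V \<in> carrier G" and t: "t \<in> carrier G"
  shows "y [^] (m::int) \<otimes> V \<otimes> y [^] (A::int) \<otimes> \<lbrakk>y,t\<rbrakk> = V \<otimes> y [^] (m + A) \<otimes> \<lbrakk>y, V [^] m \<otimes> t\<rbrakk>"
proof -
  have c1: "y [^] m \<otimes> V = V \<otimes> y [^] m \<otimes> \<lbrakk>y [^] m, V\<rbrakk>"
  proof -
    have "y [^] m \<otimes> V = V \<otimes> (inv V \<otimes> y [^] m \<otimes> V)" using y V by (simp add: m_assoc)
    also have "\<dots> = V \<otimes> (y [^] m \<otimes> \<lbrakk>y [^] m, V\<rbrakk>)" using y V cm_conj[of V "y [^] m"] by simp
    finally show ?thesis using y V by (simp add: m_assoc)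
  qed
  have "y [^] m \<otimes> V \<otimes> y [^] A \<otimes> \<lbrakk>y,t\<rbrakk> = V \<otimes> y [^] m \<otimes> (\<lbrakk>y [^] m, V\<rbrakk> \<otimes> y [^] A) \<otimes> \<lbrakk>y,t\<rbrakk>"
    using y V t by (simp add: c1 m_assoc)
  also have "\<lbrakk>y [^] m, V\<rbrakk> \<otimes> y [^] A = y [^] A \<otimes> \<lbrakk>y [^] m, V\<rbrakk>"
    using y V by (simp add: cc)
  also have "V \<otimes> y [^] m \<otimes> (y [^] A \<otimes> \<lbrakk>y [^] m, V\<rbrakk>) \<otimes> \<lbrakk>y,t\<rbrakk>
     = V \<otimes> (y [^] m \<otimes> y [^] A) \<otimes> (\<lbrakk>y [^] m, V\<rbrakk> \<otimes> \<lbrakk>y,t\<rbrakk>)"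
    using y V t by (simp add: m_assoc)
  also have "\<lbrakk>y [^] m, V\<rbrakk> \<otimes> \<lbrakk>y,t\<rbrakk> = \<lbrakk>y, V [^] m \<otimes> t\<rbrakk>"
    using y V t by (simp add: cm_pow_swap cm_mult_right)
  finally show ?thesis using y V t by (simp add: int_pow_mult m_assoc)
qed

lemma twist:
  assumes "w \<in> words k" "h \<in> tuples G k"
  shows "\<exists>t\<in>carrier G. \<forall>y\<in>carrier G. eval_word G w (\<lambda>i. h i \<otimes> y [^] c i) =
            eval_word G w h \<otimes> y [^] (wsum c w) \<otimes> \<lbrakk>y,t\<rbrakk>"
  using assms(1)
proof (induction w)
  case Nil then show ?case using assms by (intro bexI[of _ \<one>]) auto
next
  case (Cons l w)
  obtain i b where l: "l = (i,b)" by fastforce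
  with Cons.prems have i: "i < k" and w: "w \<in> words k" by auto
  have hc: "\<And>j. j < k \<Longrightarrow> h j \<in> carrier G" using assms(2) by (rule tuples_carrier)
  from Cons.IH[OF w] obtain t where t: "t \<in> carrier G" and
    IH: "\<And>y. y \<in> carrier G \<Longrightarrow> eval_word G w (\<lambda>i. h i \<otimes> y [^] c i) = eval_word G w h \<otimes> y [^] (wsum c w) \<otimes> \<lbrakk>y,t\<rbrakk>" by blast
  define W where "W = eval_word G w h"
  have W: "W \<in> carrier G" unfolding W_def using w hc by simp
  have hi: "h i \<in> carrier G" using hc i by simp
  show ?case
  proof (cases b)
    case True
    have "eval_word G (l#w) (\<lambda>i. h i \<otimes> y [^] c i) = eval_word G (l#w) h \<otimes> y [^] (wsum c (l#w)) \<otimes> \<lbrakk>y, W [^] c i \<otimes> t\<rbrakk>"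
      if y: "y \<in> carrier G" for y
    proof -
      have "eval_word G (l#w) (\<lambda>i. h i \<otimes> y [^] c i) = h i \<otimes> (y [^] c i \<otimes> W \<otimes> y [^] (wsum c w) \<otimes> \<lbrakk>y,t\<rbrakk>)"
        using True l IH[OF y] hi W t y by (simp add: W_def m_assoc)
      also have "\<dots> = h i \<otimes> W \<otimes> y [^] (c i + wsum c w) \<otimes> \<lbrakk>y, W [^] c i \<otimes> t\<rbrakk>"
        using key[OF y W t, of "c i" "wsum c w"] hi W t y by (simp add: m_assoc)
      finally show ?thesis using True l by (simp add: W_def)
    qed
    then show ?thesis using W t by (intro bexI[of _ "W [^] c i \<otimes> t"]) auto
  next
    case False
    have "eval_word G (l#w) (\<lambda>i. h i \<otimes> y [^] c i) = eval_word G (l#w) h \<otimes> y [^] (wsum c (l#w)) \<otimes> \<lbrakk>y, (inv (h i) \<otimes> W) [^] (- c i) \<otimes> t\<rbrakk>"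
      if y: "y \<in> carrier G" for y
    proof -
      have "eval_word G (l#w) (\<lambda>i. h i \<otimes> y [^] c i) = y [^] (- c i) \<otimes> (inv (h i) \<otimes> W) \<otimes> y [^] (wsum c w) \<otimes> \<lbrakk>y,t\<rbrakk>"
        using False l IH[OF y] hi W t y by (simp add: W_def m_assoc inv_mult_group int_pow_neg)
      also have "\<dots> = inv (h i) \<otimes> W \<otimes> y [^] (- c i + wsum c w) \<otimes> \<lbrakk>y, (inv (h i) \<otimes> W) [^] (- c i) \<otimes> t\<rbrakk>"
        using key[OF y _ t, of "inv (h i) \<otimes> W" "- c i" "wsum c w"] hi W t y by (simp add: m_assoc)
      finally show ?thesis using False l by (simp add: W_def)
    qed
    then show ?thesis using W t hi by (intro bexI[of _ "(inv (h i) \<otimes> W) [^] (- c i) \<otimes> t"]) auto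
  qed
qed

end



definition invw :: "letter list \<Rightarrow> letter list" where
  "invw u = rev (map (\<lambda>(i,b). (i, \<not> b)) u)"

definition powword :: "nat \<Rightarrow> int \<Rightarrow> letter list" where
  "powword i m = (if m \<ge> 0 then replicate (nat m) (i,True) else replicate (nat (-m)) (i,False))"

definition subst :: "(nat \<Rightarrow> letter list) \<Rightarrow> letter list \<Rightarrow> letter list" where
  "subst \<sigma> w = concat (map (\<lambda>(i,b). if b then \<sigma> i else invw (\<sigma> i)) w)"

lemma words_Nil[simp]: "[] \<in> words k"
  by (simp add: words_def)

lemma words_append[simp]: "u @ v \<in> words k \<longleftrightarrow> u \<in> words k \<and> v \<in> words k"
  by (auto simp: words_def)

lemma words_invw[simp]: "invw u \<in> words k \<longleftrightarrow> u \<in> words k"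
  by (auto simp: words_def invw_def)

lemma words_powword: "i < k \<Longrightarrow> powword i m \<in> words k"
  by (auto simp: words_def powword_def)

lemma subst_Nil[simp]: "subst \<sigma> [] = []" by (simp add: subst_def)
lemma subst_Cons[simp]: "subst \<sigma> ((i,b)#w) = (if b then \<sigma> i else invw (\<sigma> i)) @ subst \<sigma> w"
  by (simp add: subst_def)

lemma words_subst: "(\<And>i. i < k \<Longrightarrow> \<sigma> i \<in> words k) \<Longrightarrow> w \<in> words k \<Longrightarrow> subst \<sigma> w \<in> words k"
proof (induction w)
  case Nil then show ?case by simp
next
  case (Cons l w)
  obtain i b where l: "l = (i,b)" by fastforce
  with Cons.prems have "i < k" "w \<in> words k" by auto
  with Cons l show ?case by simp
qed

lemma words_gen1: "0 < k \<Longrightarrow> gen1 \<in> words k"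
  by (simp add: gen1_def)

context c2 begin

lemma eval_append: "u \<in> words k \<Longrightarrow> (\<And>i. i < k \<Longrightarrow> g i \<in> carrier G) \<Longrightarrow> v \<in> words k \<Longrightarrow>
   eval_word G (u @ v) g = eval_word G u g \<otimes> eval_word G v g"
  by (induction u) (auto simp: m_assoc)

lemma eval_invw: "u \<in> words k \<Longrightarrow> (\<And>i. i < k \<Longrightarrow> g i \<in> carrier G) \<Longrightarrow>
   eval_word G (invw u) g = inv (eval_word G u g)"
proof (induction u)
  case Nil then show ?case by (simp add: invw_def)
next
  case (Cons l u)
  obtain i b where l: "l = (i,b)" by fastforce
  have e: "invw (l#u) = invw u @ [(i, \<not> b)]" by (simp add: invw_def l)
  have "eval_word G (invw (l#u)) g = eval_word G (invw u) g \<otimes> eval_word G [(i, \<not> b)] g"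
    unfolding e using Cons.prems l by (intro eval_append[of _ k]) auto
  then show ?case using Cons l by (auto simp: inv_mult_group)
qed

lemma eval_powword: "i < k \<Longrightarrow> (\<And>i. i < k \<Longrightarrow> g i \<in> carrier G) \<Longrightarrow>
   eval_word G (powword i m) g = g i [^] m"
proof -
  assume i: "i < k" and g: "\<And>i. i < k \<Longrightarrow> g i \<in> carrier G"
  have gi: "g i \<in> carrier G" using g i .
  have r1: "eval_word G (replicate n (i,True)) g = g i [^] n" for n
    using gi by (induction n) (simp_all, metis nat_pow_Suc nat_pow_Suc2)
  have r2: "eval_word G (replicate n (i,False)) g = inv (g i [^] n)" for n
    using gi by (induction n) (auto simp: inv_mult_group)
  show ?thesis
  proof (cases "m \<ge> 0")
    case True then show ?thesis using r1 by (simp add: powword_def flip: int_pow_int)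
  next
    case False
    then have "m = - int (nat (-m))" by simp
    then have "g i [^] m = inv (g i [^] nat (-m))" using gi by (metis int_pow_neg_int)
    then show ?thesis using False r2 by (simp add: powword_def)
  qed
qed

lemma eval_cong: "w \<in> words k \<Longrightarrow> (\<And>i. i < k \<Longrightarrow> g i = g' i) \<Longrightarrow> eval_word G w g = eval_word G w g'"
  by (induction w) auto

lemma eval_subst:
  assumes "\<And>i. i < k \<Longrightarrow> \<sigma> i \<in> words k" "w \<in> words k" "\<And>i. i < k \<Longrightarrow> g i \<in> carrier G"
  shows "eval_word G (subst \<sigma> w) g = eval_word G w (\<lambda>i. eval_word G (\<sigma> i) g)"
  using assms(2)
proof (induction w)
  case Nil then show ?case by (simp add: subst_def)
next
  case (Cons l w)
  obtain i b where l: "l = (i,b)" by fastforce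
  with Cons.prems have i: "i < k" and w: "w \<in> words k" by auto
  have sw: "subst \<sigma> w \<in> words k" using words_subst[of k \<sigma> w] assms(1) w by blast
  have e: "subst \<sigma> (l#w) = (if b then \<sigma> i else invw (\<sigma> i)) @ subst \<sigma> w"
    by (simp add: subst_def l)
  have "eval_word G (subst \<sigma> (l#w)) g = eval_word G (if b then \<sigma> i else invw (\<sigma> i)) g \<otimes> eval_word G (subst \<sigma> w) g"
    unfolding e using assms(1)[OF i] sw assms(3) by (intro eval_append[of _ k]) auto
  also have "\<dots> = (if b then eval_word G (\<sigma> i) g else inv (eval_word G (\<sigma> i) g)) \<otimes> eval_word G w (\<lambda>i. eval_word G (\<sigma> i) g)"
    using Cons.IH[OF w] eval_invw[of "\<sigma> i" k g] assms(1)[OF i] assms(3) by simp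
  finally show ?case using l by simp
qed

lemma inj_twist:
  assumes fin: "finite (carrier G)" and cop: "coprime A (int (order G))" and t: "t \<in> carrier G"
  shows "inj_on (\<lambda>y. y [^] A \<otimes> \<lbrakk>y,t\<rbrakk>) (carrier G)"
proof -
  have "gcd A (int (order G)) = 1" using cop by (simp add: coprime_iff_gcd_eq_1)
  then obtain A' v where A': "A' * A + v * int (order G) = 1"
    using bezout_int[of A "int (order G)"] by metis
  have bk: "(y [^] A) [^] A' = y" if y: "y \<in> carrier G" for y
  proof -
    have "int (ord y) dvd int (order G)" using ord_dvd_group_order[OF y] fin by simp
    moreover have "int (order G) dvd A * A' - 1"
    proof -
      have "A * A' - 1 = int (order G) * (- v)" using A' by (simp add: algebra_simps)
      thus ?thesis by (metis dvd_triv_left)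
    qed
    ultimately have "int (ord y) dvd 1 - A * A'" by (metis dvd_trans dvd_minus_iff minus_diff_eq)
    then have "y [^] (A * A') = y [^] (1::int)" using int_pow_eq[OF y, of "A * A'" 1] by simp
    then show ?thesis using y by (simp add: int_pow_pow)
  qed
  have f: "y [^] A \<otimes> \<lbrakk>y,t\<rbrakk> = inv (t [^] A') \<otimes> y [^] A \<otimes> t [^] A'" if y: "y \<in> carrier G" for y
  proof -
    have e0: "y = (y [^] A) [^] A'" using bk y by simp
    have e1: "\<lbrakk>y,t\<rbrakk> = \<lbrakk>y [^] A, t [^] A'\<rbrakk>"
      using y t cm_pow_swap[of "y [^] A" t A'] e0 by simp
    have e2: "inv (t [^] A') \<otimes> y [^] A \<otimes> t [^] A' = y [^] A \<otimes> \<lbrakk>y [^] A, t [^] A'\<rbrakk>"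
      by (rule cm_conj) (use y t in auto)
    show ?thesis by (simp only: e1 e2)
  qed
  show ?thesis
  proof (rule inj_onI)
    fix y1 y2 assume y1: "y1 \<in> carrier G" and y2: "y2 \<in> carrier G"
      and eq: "y1 [^] A \<otimes> \<lbrakk>y1,t\<rbrakk> = y2 [^] A \<otimes> \<lbrakk>y2,t\<rbrakk>"
    define s where "s = t [^] A'"
    have s: "s \<in> carrier G" using t by (simp add: s_def)
    have "inv s \<otimes> y1 [^] A \<otimes> s = inv s \<otimes> y2 [^] A \<otimes> s"
      using f[OF y1] f[OF y2] eq by (simp add: s_def)
    then have "inv s \<otimes> y1 [^] A = inv s \<otimes> y2 [^] A" using s y1 y2 by simp
    then have "s \<otimes> (inv s \<otimes> y1 [^] A) = s \<otimes> (inv s \<otimes> y2 [^] A)" by simp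
    then have "y1 [^] A = y2 [^] A" using s y1 y2 by simp
    then have "(y1 [^] A) [^] A' = (y2 [^] A) [^] A'" by simp
    then show "y1 = y2" using bk[OF y1] bk[OF y2] by simp
  qed
qed

end



context c2 begin

context
  fixes k :: nat and w :: "letter list" and c :: "nat \<Rightarrow> int"
  assumes fin: "finite (carrier G)" and kpos: "0 < k" and w: "w \<in> words k"
    and c0: "c 0 = 1" and cop: "coprime (wsum c w) (int (order G))"
begin

definition sig :: "nat \<Rightarrow> letter list" where
  "sig i = (if i = 0 then w else (i,True) # powword 0 (- c i))"

definition S :: "(nat \<Rightarrow> 'a) \<Rightarrow> (nat \<Rightarrow> 'a)" where
  "S g = (\<lambda>i\<in>{0..<k}. eval_word G (sig i) g)"

lemma sig_words: "i < k \<Longrightarrow> sig i \<in> words k"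
  using w kpos by (auto simp: sig_def words_powword)

lemma T_carrier: "g \<in> tuples G k \<Longrightarrow> (\<And>i. i < k \<Longrightarrow> g i \<in> carrier G)"
  by (rule tuples_carrier)

lemma S_eval: "g \<in> tuples G k \<Longrightarrow> i < k \<Longrightarrow>
   S g i = (if i = 0 then eval_word G w g else g i \<otimes> g 0 [^] (- c i))"
  using kpos T_carrier[of g] by (simp add: S_def sig_def eval_powword[of 0 k])

lemma S_tuples: assumes g: "g \<in> tuples G k" shows "S g \<in> tuples G k"
proof -
  have "eval_word G (sig i) g \<in> carrier G" if i: "i < k" for i
    by (rule eval_closed[OF sig_words[OF i]]) (rule T_carrier[OF g])
  then show ?thesis by (auto simp: S_def tuples_def)
qed

lemma T_finite: "finite (tuples G k)"
  unfolding tuples_def using fin by (intro finite_PiE) auto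

lemma S_inj: "inj_on S (tuples G k)"
proof (rule inj_onI)
  fix g g' assume g: "g \<in> tuples G k" and g': "g' \<in> tuples G k" and eq: "S g = S g'"
  define h where "h = (\<lambda>i\<in>{0..<k}. if i = 0 then \<one> else S g i)"
  have hT: "h \<in> tuples G k"
    using S_tuples[OF g] by (auto simp: h_def tuples_def PiE_def Pi_def)
  obtain t where t: "t \<in> carrier G" and
    tw: "\<And>y. y \<in> carrier G \<Longrightarrow> eval_word G w (\<lambda>i. h i \<otimes> y [^] c i) =
            eval_word G w h \<otimes> y [^] (wsum c w) \<otimes> \<lbrakk>y,t\<rbrakk>"
    using twist[OF w hT, of c] by blast
  have dec: "eval_word G w x = eval_word G w h \<otimes> (x 0 [^] (wsum c w) \<otimes> \<lbrakk>x 0,t\<rbrakk>)"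
    if x: "x \<in> tuples G k" and Sx: "S x = S g" for x
  proof -
    have xc: "\<And>i. i < k \<Longrightarrow> x i \<in> carrier G" using x by (rule tuples_carrier)
    have x0: "x 0 \<in> carrier G" using xc kpos by simp
    have "eval_word G w x = eval_word G w (\<lambda>i. h i \<otimes> x 0 [^] c i)"
    proof (rule eval_cong[OF w])
      fix i assume i: "i < k"
      show "x i = h i \<otimes> x 0 [^] c i"
      proof (cases "i = 0")
        case True then show ?thesis using x0 c0 i by (simp add: h_def)
      next
        case False
        have "h i = x i \<otimes> x 0 [^] (- c i)" using False i S_eval[OF x i] Sx by (simp add: h_def)
        then show ?thesis using xc[OF i] x0 by (simp add: m_assoc flip: int_pow_mult)
      qed
    qed
    also have "\<dots> = eval_word G w h \<otimes> (x 0 [^] (wsum c w) \<otimes> \<lbrakk>x 0,t\<rbrakk>)"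
      using tw[OF x0] hT x0 t w by (simp add: m_assoc tuples_carrier)
    finally show ?thesis .
  qed
  have gc: "\<And>i. i < k \<Longrightarrow> g i \<in> carrier G" using g by (rule tuples_carrier)
  have gc': "\<And>i. i < k \<Longrightarrow> g' i \<in> carrier G" using g' by (rule tuples_carrier)
  have ew: "eval_word G w g = eval_word G w g'"
    using S_eval[OF g kpos] S_eval[OF g' kpos] eq by simp
  have "eval_word G w h \<otimes> (g 0 [^] (wsum c w) \<otimes> \<lbrakk>g 0,t\<rbrakk>) = eval_word G w h \<otimes> (g' 0 [^] (wsum c w) \<otimes> \<lbrakk>g' 0,t\<rbrakk>)"
    using dec[OF g refl] dec[OF g' eq[symmetric]] ew by simp
  then have "g 0 [^] (wsum c w) \<otimes> \<lbrakk>g 0,t\<rbrakk> = g' 0 [^] (wsum c w) \<otimes> \<lbrakk>g' 0,t\<rbrakk>"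
    using hT w gc gc' kpos t by (simp add: tuples_carrier)
  then have e0: "g 0 = g' 0"
    using inj_twist[OF fin cop t] gc gc' kpos by (auto dest: inj_onD)
  show "g = g'"
  proof (rule extensionalityI)
    show "g \<in> extensional {0..<k}" "g' \<in> extensional {0..<k}"
      using g g' by (auto simp: tuples_def PiE_def)
  next
    fix i assume "i \<in> {0..<k}"
    then have i: "i < k" by simp
    show "g i = g' i"
    proof (cases "i = 0")
      case True then show ?thesis using e0 by simp
    next
      case False
      have "g i \<otimes> g 0 [^] (- c i) = g' i \<otimes> g' 0 [^] (- c i)"
        using S_eval[OF g i] S_eval[OF g' i] eq False by simp
      moreover have "g' 0 [^] (- c i) \<in> carrier G" using gc' kpos by simp
      ultimately show ?thesis using e0 gc[OF i] gc'[OF i] by (metis right_cancel)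
    qed
  qed
qed


lemma S_image: "S ` tuples G k = tuples G k"
  by (rule endo_inj_surj[OF T_finite]) (use S_tuples S_inj in auto)

lemma fiber_card:
  assumes x: "x \<in> carrier G"
  shows "card {g \<in> tuples G k. eval_word G w g = x} = card (carrier G) ^ (k - 1)"
proof -
  have "S ` {g \<in> tuples G k. eval_word G w g = x} = {h \<in> tuples G k. h 0 = x}"
  proof -
    have "S ` {g \<in> tuples G k. eval_word G w g = x} = {h \<in> S ` tuples G k. h 0 = x}"
      using S_eval kpos by auto
    then show ?thesis using S_image by simp
  qed
  moreover have "inj_on S {g \<in> tuples G k. eval_word G w g = x}"
    by (rule inj_on_subset[OF S_inj]) blast
  ultimately have "card {g \<in> tuples G k. eval_word G w g = x} = card {h \<in> tuples G k. h 0 = x}"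
    by (simp flip: card_image)
  also have "{h \<in> tuples G k. h 0 = x} = (\<Pi>\<^sub>E i\<in>{0..<k}. if i = 0 then {x} else carrier G)"
    using x kpos by (auto simp: tuples_def PiE_def Pi_def split: if_splits)
  also have "card \<dots> = (\<Prod>i\<in>{0..<k}. card (if i = 0 then {x} else carrier G))"
    by (rule card_PiE) simp
  also have "\<dots> = (\<Prod>i\<in>{0..<k}. if i = 0 then 1 else card (carrier G))"
    by (rule prod.cong) auto
  also have "\<dots> = (\<Prod>i\<in>{Suc 0..<k}. if i = 0 then 1 else card (carrier G))"
    using kpos by (simp add: prod.atLeast_Suc_lessThan)
  also have "\<dots> = (\<Prod>i\<in>{Suc 0..<k}. card (carrier G))"
    by (rule prod.cong) auto
  also have "\<dots> = card (carrier G) ^ (k - 1)"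
    by simp
  finally show ?thesis .
qed

definition psi :: "((nat \<Rightarrow> 'a) \<Rightarrow> 'a) \<Rightarrow> ((nat \<Rightarrow> 'a) \<Rightarrow> 'a)" where
  "psi f = (\<lambda>g\<in>tuples G k. f (S g))"

lemma psi_word: assumes u: "u \<in> words k"
  shows "psi (word_map G k u) = word_map G k (subst sig u)"
proof
  fix g show "psi (word_map G k u) g = word_map G k (subst sig u) g"
  proof (cases "g \<in> tuples G k")
    case True
    have "eval_word G u (S g) = eval_word G u (\<lambda>i. eval_word G (sig i) g)"
      by (rule eval_cong[OF u]) (simp add: S_def)
    also have "\<dots> = eval_word G (subst sig u) g"
      by (rule eval_subst[symmetric, OF sig_words u T_carrier[OF True]])
    finally show ?thesis using True S_tuples[OF True] by (simp add: psi_def word_map_def)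
  next
    case False then show ?thesis by (simp add: psi_def word_map_def)
  qed
qed

lemma psi_gen1: "psi (word_map G k gen1) = word_map G k w"
proof
  fix g show "psi (word_map G k gen1) g = word_map G k w g"
  proof (cases "g \<in> tuples G k")
    case True
    have "S g 0 \<in> carrier G" using S_tuples[OF True] kpos by (rule tuples_carrier)
    then show ?thesis using True S_tuples[OF True] S_eval[OF True kpos]
      by (simp add: psi_def word_map_def gen1_def)
  next
    case False then show ?thesis by (simp add: psi_def word_map_def)
  qed
qed

abbreviation WG where "WG \<equiv> word_map_group G k"

lemma WG_carrier: "carrier WG = word_map G k ` words k"
  by (simp add: word_map_group_def)

lemma WG_mult: "f \<otimes>\<^bsub>WG\<^esub> h = (\<lambda>g\<in>tuples G k. f g \<otimes> h g)"
  by (simp add: word_map_group_def)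

lemma WG_mult_closed: "f \<in> carrier WG \<Longrightarrow> h \<in> carrier WG \<Longrightarrow> f \<otimes>\<^bsub>WG\<^esub> h \<in> carrier WG"
proof -
  assume "f \<in> carrier WG" "h \<in> carrier WG"
  then obtain u v where u: "u \<in> words k" "f = word_map G k u" and v: "v \<in> words k" "h = word_map G k v"
    by (auto simp: WG_carrier)
  have "f \<otimes>\<^bsub>WG\<^esub> h = word_map G k (u @ v)"
  proof
    fix g show "(f \<otimes>\<^bsub>WG\<^esub> h) g = word_map G k (u @ v) g"
      using u v eval_append[of u k g v] T_carrier[of g]
      by (cases "g \<in> tuples G k") (auto simp: WG_mult word_map_def)
  qed
  then show ?thesis using u v by (auto simp: WG_carrier)
qed

lemma psi_mult: "psi (f \<otimes>\<^bsub>WG\<^esub> h) = psi f \<otimes>\<^bsub>WG\<^esub> psi h"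
  using S_tuples by (auto simp: psi_def WG_mult)

lemma psi_into: "psi ` carrier WG \<subseteq> carrier WG"
  using psi_word words_subst[OF sig_words] by (auto simp: WG_carrier)

lemma WG_finite: "finite (carrier WG)"
proof -
  have "carrier WG \<subseteq> tuples G k \<rightarrow>\<^sub>E carrier G"
    using T_carrier by (auto simp: WG_carrier word_map_def intro!: eval_closed)
  moreover have "finite (tuples G k \<rightarrow>\<^sub>E carrier G)"
    using T_finite fin by (intro finite_PiE) auto
  ultimately show ?thesis by (rule finite_subset)
qed

lemma psi_inj: "inj_on psi (carrier WG)"
proof (rule inj_onI)
  fix f h assume f: "f \<in> carrier WG" and h: "h \<in> carrier WG" and eq: "psi f = psi h"
  have ext: "f \<in> extensional (tuples G k)" "h \<in> extensional (tuples G k)"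
    using f h by (auto simp: WG_carrier word_map_def)
  show "f = h"
  proof (rule extensionalityI[OF ext])
    fix x assume x: "x \<in> tuples G k"
    then obtain g where g: "g \<in> tuples G k" "x = S g" using S_image by force
    have "psi f g = psi h g" using eq by simp
    then show "f x = h x" using g by (simp add: psi_def)
  qed
qed

lemma psi_bij: "bij_betw psi (carrier WG) (carrier WG)"
  using endo_inj_surj[OF WG_finite psi_into psi_inj] psi_inj by (simp add: bij_betw_def)

lemma automorphic_w: "automorphic G k w gen1"
proof -
  define phi where "phi = inv_into (carrier WG) psi"
  have bij: "bij_betw phi (carrier WG) (carrier WG)"
    unfolding phi_def by (rule bij_betw_inv_into[OF psi_bij])
  have hom: "phi \<in> hom WG WG"
  proof (rule homI)
    fix x assume "x \<in> carrier WG" then show "phi x \<in> carrier WG"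
      using bij by (auto simp: bij_betw_def)
  next
    fix x y assume x: "x \<in> carrier WG" and y: "y \<in> carrier WG"
    have px: "phi x \<in> carrier WG" "psi (phi x) = x"
      using x bij psi_bij unfolding phi_def by (auto simp: bij_betw_def f_inv_into_f)
    have py: "phi y \<in> carrier WG" "psi (phi y) = y"
      using y bij psi_bij unfolding phi_def by (auto simp: bij_betw_def f_inv_into_f)
    show "phi (x \<otimes>\<^bsub>WG\<^esub> y) = phi x \<otimes>\<^bsub>WG\<^esub> phi y"
      unfolding phi_def
    proof (rule inv_into_f_eq[OF psi_inj])
      show "inv_into (carrier WG) psi x \<otimes>\<^bsub>WG\<^esub> inv_into (carrier WG) psi y \<in> carrier WG"
        using px py WG_mult_closed unfolding phi_def by blast
      show "psi (inv_into (carrier WG) psi x \<otimes>\<^bsub>WG\<^esub> inv_into (carrier WG) psi y) = x \<otimes>\<^bsub>WG\<^esub> y"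
        using px py unfolding phi_def by (simp add: psi_mult)
    qed
  qed
  have g1: "word_map G k gen1 \<in> carrier WG" using words_gen1[OF kpos] by (simp add: WG_carrier)
  have "phi (word_map G k w) = word_map G k gen1"
    unfolding phi_def using psi_gen1 by (metis inv_into_f_eq[OF psi_inj g1])
  then show ?thesis using hom bij unfolding automorphic_def by (auto intro!: bexI[of _ phi] simp: iso_def)
qed

end
end



lemma (in comm_group) finprod_pow_nat:
  assumes "finite A" "f \<in> A \<rightarrow> carrier G"
  shows "finprod G (\<lambda>i. f i [^] (n::nat)) A = finprod G f A [^] n"
  using assms
proof (induction A rule: finite_induct)
  case empty then show ?case by simp
next
  case (insert a A)
  then have fa: "f a \<in> carrier G" and fA: "f \<in> A \<rightarrow> carrier G" by auto
  have "finprod G (\<lambda>i. f i [^] n) (insert a A) = f a [^] n \<otimes> finprod G (\<lambda>i. f i [^] n) A"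
    using insert fa fA by (intro finprod_insert) auto
  also have "\<dots> = f a [^] n \<otimes> finprod G f A [^] n" using insert fA by simp
  also have "\<dots> = (f a \<otimes> finprod G f A) [^] n"
    using fa fA by (simp add: pow_mult_distrib m_comm)
  also have "f a \<otimes> finprod G f A = finprod G f (insert a A)"
    using insert fa fA by simp
  finally show ?case .
qed

definition ex :: "letter list \<Rightarrow> nat \<Rightarrow> int" where
  "ex w i = wsum (\<lambda>j. if j = i then 1 else 0) w"

lemma ex_Nil[simp]: "ex [] i = 0" by (simp add: ex_def)
lemma ex_Cons[simp]: "ex ((j,b)#w) i = (if j = i then (if b then 1 else -1) else 0) + ex w i"
  by (simp add: ex_def)

context c2 begin

abbreviation DD where "DD \<equiv> derived G (carrier G)"
abbreviation Q where "Q \<equiv> G Mod DD"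

lemma DD_normal: "DD \<lhd> G" by (rule derived_self_is_normal)
lemma DD_sub: "subgroup DD G" using DD_normal by (rule normal_imp_subgroup)
lemma DD_carrier: "DD \<subseteq> carrier G" using DD_sub by (rule subgroup.subset)

lemma dset_cm: "h \<in> derived_set G (carrier G) \<Longrightarrow> \<exists>a\<in>carrier G. \<exists>b\<in>carrier G. h = \<lbrakk>a,b\<rbrakk>"
proof -
  assume "h \<in> derived_set G (carrier G)"
  then obtain h1 h2 where h: "h1 \<in> carrier G" "h2 \<in> carrier G" "h = h1 \<otimes> h2 \<otimes> inv h1 \<otimes> inv h2" by blast
  then have "h = \<lbrakk>inv h1, inv h2\<rbrakk>" by (simp add: commutator_def)
  then show ?thesis using h by blast
qed

lemma cm_in_DD: "x \<in> carrier G \<Longrightarrow> y \<in> carrier G \<Longrightarrow> \<lbrakk>x,y\<rbrakk> \<in> DD"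
proof -
  assume x: "x \<in> carrier G" and y: "y \<in> carrier G"
  have "\<lbrakk>x,y\<rbrakk> = inv x \<otimes> inv y \<otimes> inv (inv x) \<otimes> inv (inv y)" using x y by (simp add: commutator_def)
  then have "\<lbrakk>x,y\<rbrakk> \<in> derived_set G (carrier G)" using x y by blast
  then show ?thesis unfolding derived_def by (rule generate.incl)
qed

lemma DD_central: "d \<in> DD \<Longrightarrow> z \<in> carrier G \<Longrightarrow> d \<otimes> z = z \<otimes> d"
  unfolding derived_def
proof (induction d arbitrary: z rule: generate.induct)
  case one then show ?case by (metis l_one r_one)
next
  case (incl h)
  then obtain a b where ab: "a \<in> carrier G" "b \<in> carrier G" "h = \<lbrakk>a,b\<rbrakk>" using dset_cm by blast
  then show ?case using incl.prems cc by simp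
next
  case (inv h)
  then obtain a b where ab: "a \<in> carrier G" "b \<in> carrier G" "h = \<lbrakk>a,b\<rbrakk>" using dset_cm by blast
  then have "inv h = \<lbrakk>b,a\<rbrakk>" by (simp add: cm_swap)
  then show ?case using ab inv.prems cc by simp
next
  case (eng h1 h2)
  have c1: "h1 \<in> carrier G" using eng.hyps(1) generate_in_carrier derived_set_in_carrier by blast
  have c2: "h2 \<in> carrier G" using eng.hyps(2) generate_in_carrier derived_set_in_carrier by blast
  have "h1 \<otimes> h2 \<otimes> z = h1 \<otimes> (h2 \<otimes> z)" using c1 c2 eng.prems by (simp add: m_assoc)
  also have "\<dots> = h1 \<otimes> (z \<otimes> h2)" using eng.IH(2)[OF eng.prems] by simp
  also have "\<dots> = (h1 \<otimes> z) \<otimes> h2" using c1 c2 eng.prems by (simp add: m_assoc)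
  also have "\<dots> = z \<otimes> h1 \<otimes> h2" using eng.IH(1)[OF eng.prems] by simp
  finally show ?case using c1 c2 eng.prems by (simp add: m_assoc)
qed

lemma Q_comm: "comm_group Q" by (rule derived_quot_is_comm_group)
lemma pi_hom: "(\<lambda>x. DD #> x) \<in> hom G Q"
  using DD_normal by (rule normal.r_coset_hom_Mod)

lemma Q_carrier: "carrier Q = (\<lambda>x. DD #> x) ` carrier G"
  by (auto simp: FactGroup_def RCOSETS_def)

lemma Q_one: "\<one>\<^bsub>Q\<^esub> = DD"
  by (simp add: FactGroup_def)

lemma DD_in_Q[simp]: "DD \<in> carrier Q"
proof -
  interpret Q: comm_group Q by (rule Q_comm)
  show ?thesis using Q.one_closed by (simp add: Q_one)
qed

lemma pi_mult: "x \<in> carrier G \<Longrightarrow> y \<in> carrier G \<Longrightarrow> DD #> (x \<otimes> y) = (DD #> x) \<otimes>\<^bsub>Q\<^esub> (DD #> y)"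
  using pi_hom by (simp add: hom_mult)

lemma pi_inv: "x \<in> carrier G \<Longrightarrow> DD #> inv x = inv\<^bsub>Q\<^esub> (DD #> x)"
proof -
  assume x: "x \<in> carrier G"
  interpret Q: comm_group Q by (rule Q_comm)
  have "(DD #> inv x) \<otimes>\<^bsub>Q\<^esub> (DD #> x) = \<one>\<^bsub>Q\<^esub>"
    using x pi_mult[of "inv x" x] by (simp add: Q_one DD_carrier)
  moreover have "DD #> inv x \<in> carrier Q" "DD #> x \<in> carrier Q" using x by (auto simp: Q_carrier)
  ultimately show ?thesis by (simp add: Q.inv_equality)
qed

lemma pi_pow: "x \<in> carrier G \<Longrightarrow> DD #> (x [^] (n::nat)) = (DD #> x) [^]\<^bsub>Q\<^esub> n"
  by (rule hom_nat_pow[OF pi_hom _ is_group derived_quot_is_group])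

lemma pi_eval:
  assumes w: "w \<in> words k" and g: "g \<in> tuples G k"
  shows "DD #> eval_word G w g = finprod Q (\<lambda>i. (DD #> g i) [^]\<^bsub>Q\<^esub> ex w i) {0..<k}"
  using w
proof (induction w)
  interpret Q: comm_group Q by (rule Q_comm)
  case Nil
  have "finprod Q (\<lambda>i. \<one>\<^bsub>Q\<^esub>) {0..<k} = \<one>\<^bsub>Q\<^esub>" by (rule Q.finprod_one)
  then show ?case by (simp add: Q_one DD_carrier)
next
  interpret Q: comm_group Q by (rule Q_comm)
  case (Cons l w)
  obtain j b where l: "l = (j,b)" by fastforce
  with Cons.prems have j: "j < k" and w: "w \<in> words k" by auto
  have gc: "\<And>i. i < k \<Longrightarrow> g i \<in> carrier G" using g by (rule tuples_carrier)
  define x where "x = (\<lambda>i. DD #> g i)"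
  have xc: "\<And>i. i < k \<Longrightarrow> x i \<in> carrier Q" using gc by (auto simp: x_def Q_carrier)
  define s :: int where "s = (if b then 1 else -1)"
  have lett: "DD #> (if b then g j else inv (g j)) = x j [^]\<^bsub>Q\<^esub> s"
    using gc[OF j] xc[OF j] by (auto simp: s_def x_def pi_inv Q.int_pow_neg)
  have e: "eval_word G (l#w) g = (if b then g j else inv (g j)) \<otimes> eval_word G w g" by (simp add: l)
  have "DD #> eval_word G (l#w) g = (DD #> (if b then g j else inv (g j))) \<otimes>\<^bsub>Q\<^esub> (DD #> eval_word G w g)"
    unfolding e by (rule pi_mult) (use gc j w in auto)
  also have "\<dots> = x j [^]\<^bsub>Q\<^esub> s \<otimes>\<^bsub>Q\<^esub> finprod Q (\<lambda>i. x i [^]\<^bsub>Q\<^esub> ex w i) {0..<k}"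
    by (simp only: lett Cons.IH[OF w] x_def)
  also have "x j [^]\<^bsub>Q\<^esub> s = finprod Q (\<lambda>i. if j = i then x i [^]\<^bsub>Q\<^esub> s else \<one>\<^bsub>Q\<^esub>) {0..<k}"
    using j xc by (intro Q.finprod_singleton[symmetric]) auto
  also have "finprod Q (\<lambda>i. if j = i then x i [^]\<^bsub>Q\<^esub> s else \<one>\<^bsub>Q\<^esub>) {0..<k} \<otimes>\<^bsub>Q\<^esub>
        finprod Q (\<lambda>i. x i [^]\<^bsub>Q\<^esub> ex w i) {0..<k}
      = finprod Q (\<lambda>i. (if j = i then x i [^]\<^bsub>Q\<^esub> s else \<one>\<^bsub>Q\<^esub>) \<otimes>\<^bsub>Q\<^esub> x i [^]\<^bsub>Q\<^esub> ex w i) {0..<k}"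
    using xc by (intro Q.finprod_multf[symmetric]) auto
  also have "\<dots> = finprod Q (\<lambda>i. x i [^]\<^bsub>Q\<^esub> ex (l#w) i) {0..<k}"
  proof (intro Q.finprod_cong')
    fix i assume "i \<in> {0..<k}"
    then have i: "i < k" by simp
    show "(if j = i then x i [^]\<^bsub>Q\<^esub> s else \<one>\<^bsub>Q\<^esub>) \<otimes>\<^bsub>Q\<^esub> x i [^]\<^bsub>Q\<^esub> ex w i = x i [^]\<^bsub>Q\<^esub> ex (l#w) i"
      using xc[OF i] by (auto simp: l s_def Q.int_pow_mult)
  qed (use xc in auto)
  finally show ?case by (simp add: x_def)
qed

end



context c2 begin

lemma cm_central: "d \<in> DD \<Longrightarrow> b \<in> carrier G \<Longrightarrow> \<lbrakk>d,b\<rbrakk> = \<one>"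
proof -
  assume d: "d \<in> DD" and b: "b \<in> carrier G"
  have dc: "d \<in> carrier G" using d DD_carrier by blast
  have "\<lbrakk>d,b\<rbrakk> = inv d \<otimes> inv b \<otimes> (d \<otimes> b)" using dc b by (simp add: commutator_def m_assoc)
  also have "d \<otimes> b = b \<otimes> d" using DD_central[OF d b] .
  finally show ?thesis using dc b by (simp add: m_assoc)
qed

context
  fixes k :: nat and w :: "letter list" and p :: nat
  assumes fin: "finite (carrier G)" and w: "w \<in> words k"
    and surj: "eval_word G w ` tuples G k = carrier G"
    and p: "Factorial_Ring.prime p" and pdvd: "\<And>i. i < k \<Longrightarrow> int p dvd ex w i"
begin

lemma Qpow: assumes x: "x \<in> carrier G" shows "\<exists>z\<in>carrier G. DD #> x = (DD #> z) [^]\<^bsub>Q\<^esub> p"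
proof -
  interpret Q: comm_group Q by (rule Q_comm)
  obtain g where g: "g \<in> tuples G k" and xg: "x = eval_word G w g" using x surj by force
  have gc: "\<And>i. i < k \<Longrightarrow> g i \<in> carrier G" using g by (rule tuples_carrier)
  define XX where "XX = (\<lambda>i. DD #> g i)"
  have XXc: "\<And>i. i < k \<Longrightarrow> XX i \<in> carrier Q" using gc by (auto simp: XX_def Q_carrier)
  define b where "b = (\<lambda>i. ex w i div int p)"
  have "DD #> x = finprod Q (\<lambda>i. XX i [^]\<^bsub>Q\<^esub> ex w i) {0..<k}"
    unfolding xg XX_def by (rule pi_eval[OF w g])
  also have "\<dots> = finprod Q (\<lambda>i. (XX i [^]\<^bsub>Q\<^esub> b i) [^]\<^bsub>Q\<^esub> p) {0..<k}"
  proof (intro Q.finprod_cong')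
    fix i assume "i \<in> {0..<k}"
    then have i: "i < k" by simp
    have "ex w i = b i * int p" using pdvd[OF i] by (simp add: b_def)
    then show "XX i [^]\<^bsub>Q\<^esub> ex w i = (XX i [^]\<^bsub>Q\<^esub> b i) [^]\<^bsub>Q\<^esub> p"
      using XXc[OF i] by (simp add: Q.int_pow_pow flip: int_pow_int)
  qed (use XXc in auto)
  also have "\<dots> = finprod Q (\<lambda>i. XX i [^]\<^bsub>Q\<^esub> b i) {0..<k} [^]\<^bsub>Q\<^esub> p"
    by (rule Q.finprod_pow_nat) (use XXc in auto)
  finally have e: "DD #> x = finprod Q (\<lambda>i. XX i [^]\<^bsub>Q\<^esub> b i) {0..<k} [^]\<^bsub>Q\<^esub> p" .
  have "finprod Q (\<lambda>i. XX i [^]\<^bsub>Q\<^esub> b i) {0..<k} \<in> carrier Q"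
    by (rule Q.finprod_closed) (use XXc in auto)
  then obtain z where "z \<in> carrier G" "finprod Q (\<lambda>i. XX i [^]\<^bsub>Q\<^esub> b i) {0..<k} = DD #> z"
    by (auto simp: Q_carrier)
  then show ?thesis using e by auto
qed

lemma Q_finite: "finite (carrier Q)"
  using fin by (simp add: Q_carrier)

lemma inj_Q: "inj_on (\<lambda>q. q [^]\<^bsub>Q\<^esub> p) (carrier Q)"
proof -
  interpret Q: comm_group Q by (rule Q_comm)
  have "(\<lambda>q. q [^]\<^bsub>Q\<^esub> p) ` carrier Q = carrier Q"
  proof
    show "(\<lambda>q. q [^]\<^bsub>Q\<^esub> p) ` carrier Q \<subseteq> carrier Q" by auto
    show "carrier Q \<subseteq> (\<lambda>q. q [^]\<^bsub>Q\<^esub> p) ` carrier Q"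
    proof
      fix q assume "q \<in> carrier Q"
      then obtain x where x: "x \<in> carrier G" "q = DD #> x" by (auto simp: Q_carrier)
      then obtain z where "z \<in> carrier G" "DD #> x = (DD #> z) [^]\<^bsub>Q\<^esub> p" using Qpow by blast
      then show "q \<in> (\<lambda>q. q [^]\<^bsub>Q\<^esub> p) ` carrier Q" using x by (auto simp: Q_carrier)
    qed
  qed
  then show ?thesis using Q_finite by (intro eq_card_imp_inj_on) auto
qed

lemma coset_split: assumes x: "x \<in> carrier G" and y: "y \<in> carrier G" and e: "DD #> x = DD #> y"
  shows "\<exists>d\<in>DD. x = d \<otimes> y"
proof -
  have "x \<in> DD #> x" using x DD_sub by (rule rcos_self)
  then have "x \<in> DD #> y" using e by simp
  then show ?thesis by (auto simp: r_coset_def)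
qed

lemma cm_ppow: assumes a: "a \<in> carrier G" and b: "b \<in> carrier G"
  shows "\<exists>e\<in>DD. \<lbrakk>a,b\<rbrakk> = e [^] p"
proof -
  obtain z where z: "z \<in> carrier G" and ez: "DD #> a = (DD #> z) [^]\<^bsub>Q\<^esub> p" using Qpow[OF a] by blast
  then have "DD #> a = DD #> (z [^] p)" using pi_pow by simp
  then obtain d where d: "d \<in> DD" and ad: "a = d \<otimes> z [^] p" using coset_split a z by blast
  have dc: "d \<in> carrier G" using d DD_carrier by blast
  have "\<lbrakk>a,b\<rbrakk> = \<lbrakk>d,b\<rbrakk> \<otimes> \<lbrakk>z [^] p, b\<rbrakk>" using ad dc z b by (simp add: cm_mult_left)
  also have "\<dots> = \<lbrakk>z,b\<rbrakk> [^] p" using cm_central[OF d b] z b by (simp add: cm_pow_left_nat)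
  finally show ?thesis using cm_in_DD[OF z b] by blast
qed

lemma DD_ppow: "d \<in> DD \<Longrightarrow> \<exists>e\<in>DD. d = e [^] p"
  unfolding derived_def
proof (induction d rule: generate.induct)
  case one
  have o: "\<one> \<in> DD" by (rule subgroup.one_closed[OF DD_sub])
  have "\<one> = \<one> [^] p" by simp
  with o show ?case unfolding derived_def by blast
next
  case (incl h)
  then obtain a b where ab: "a \<in> carrier G" "b \<in> carrier G" "h = \<lbrakk>a,b\<rbrakk>" using dset_cm by blast
  obtain e where "e \<in> DD" "\<lbrakk>a,b\<rbrakk> = e [^] p" using cm_ppow[OF ab(1) ab(2)] by blast
  then have "\<exists>e\<in>DD. h = e [^] p" using ab by auto
  then show ?case unfolding derived_def .
next
  case (inv h)
  then obtain a b where ab: "a \<in> carrier G" "b \<in> carrier G" "h = \<lbrakk>a,b\<rbrakk>" using dset_cm by blast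
  then have ih: "inv h = \<lbrakk>b,a\<rbrakk>" by (simp add: cm_swap)
  obtain e where "e \<in> DD" "\<lbrakk>b,a\<rbrakk> = e [^] p" using cm_ppow[OF ab(2) ab(1)] by blast
  then have "\<exists>e\<in>DD. inv h = e [^] p" using ih by auto
  then show ?case unfolding derived_def .
next
  case (eng h1 h2)
  obtain e1 where e1: "e1 \<in> DD" "h1 = e1 [^] p" using eng.IH(1) unfolding derived_def by blast
  obtain e2 where e2: "e2 \<in> DD" "h2 = e2 [^] p" using eng.IH(2) unfolding derived_def by blast
  have c1: "e1 \<in> carrier G" "e2 \<in> carrier G" using e1 e2 DD_carrier by auto
  have "h1 \<otimes> h2 = (e1 \<otimes> e2) [^] p"
    by (simp only: e1(2) e2(2) pow_mult_distrib[OF DD_central[OF e1(1) c1(2)] c1])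
  moreover have "e1 \<otimes> e2 \<in> DD" using e1 e2 DD_sub by (simp add: subgroup.m_closed)
  ultimately have "\<exists>e\<in>DD. h1 \<otimes> h2 = e [^] p" by blast
  then show ?case unfolding derived_def .
qed

lemma pow_in_DD: "d \<in> DD \<Longrightarrow> d [^] (n::nat) \<in> DD"
  by (induction n) (auto intro: subgroup.m_closed[OF DD_sub] subgroup.one_closed[OF DD_sub])

lemma inj_DD: "inj_on (\<lambda>d. d [^] p) DD"
proof -
  have "(\<lambda>d. d [^] p) ` DD = DD"
  proof
    show "(\<lambda>d. d [^] p) ` DD \<subseteq> DD" using pow_in_DD by auto
    show "DD \<subseteq> (\<lambda>d. d [^] p) ` DD" using DD_ppow by blast
  qed
  moreover have "finite DD" using fin DD_carrier by (rule finite_subset[rotated])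
  ultimately show ?thesis by (intro eq_card_imp_inj_on) auto
qed

lemma no_p: assumes "p dvd order G" shows False
proof -
  interpret Q: comm_group Q by (rule Q_comm)
  obtain m where "order G = p ^ 1 * m" using assms by auto
  then obtain H where H: "subgroup H G" "card H = p" using sylow_thm[OF p is_group _ fin] by fastforce
  have c1: "card H > 1" using H p prime_gt_1_nat by simp
  have "\<not> H \<subseteq> {\<one>}"
  proof
    assume "H \<subseteq> {\<one>}"
    then have "card H \<le> card {\<one>}" by (intro card_mono) auto
    with c1 show False by simp
  qed
  then obtain u where u: "u \<in> H" "u \<noteq> \<one>" by blast
  interpret HG: group "G\<lparr>carrier := H\<rparr>" using H(1) by (rule subgroup.subgroup_is_group) (rule is_group)
  have "u [^]\<^bsub>G\<lparr>carrier := H\<rparr>\<^esub> order (G\<lparr>carrier := H\<rparr>) = \<one>\<^bsub>G\<lparr>carrier := H\<rparr>\<^esub>"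
    using u by (intro HG.pow_order_eq_1) simp
  then have up: "u [^] p = \<one>" using H by (simp add: order_def flip: nat_pow_consistent)
  have uc: "u \<in> carrier G" using u H(1) subgroup.subset by blast
  have "(DD #> u) [^]\<^bsub>Q\<^esub> p = (DD #> \<one>) [^]\<^bsub>Q\<^esub> p"
    using up uc by (simp flip: pi_pow)
  then have "DD #> u = DD #> \<one>"
    using inj_Q uc by (auto simp: Q_carrier dest: inj_onD)
  then have "DD #> u = DD" using coset_mult_one[OF DD_carrier] by simp
  then have uD: "u \<in> DD" by (rule coset_join1[OF _ uc DD_sub])
  have "u [^] p = \<one> [^] p" using up by simp
  moreover have "\<one> \<in> DD" by (rule subgroup.one_closed[OF DD_sub])
  ultimately have "u = \<one>" using inj_onD[OF inj_DD _ uD] by blast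
  then show False using u by simp
qed

end
end



lemma bez_set:
  fixes a :: "nat \<Rightarrow> int"
  assumes "finite I"
  shows "\<exists>\<beta> d. (\<forall>i\<in>I. d dvd a i) \<and> (\<Sum>i\<in>I. \<beta> i * a i) = d"
  using assms
proof (induction I rule: finite_induct)
  case empty then show ?case by (intro exI[of _ "\<lambda>_. 0"] exI[of _ 0]) simp
next
  case (insert j I)
  then obtain \<beta> d where d: "\<forall>i\<in>I. d dvd a i" and s: "(\<Sum>i\<in>I. \<beta> i * a i) = d" by blast
  obtain u v where uv: "u * d + v * a j = gcd d (a j)" using bezout_int by blast
  define \<beta>' where "\<beta>' = (\<lambda>i. if i = j then v else u * \<beta> i)"
  have e1: "(\<Sum>i\<in>I. \<beta>' i * a i) = (\<Sum>i\<in>I. u * (\<beta> i * a i))"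
    by (rule sum.cong) (use insert.hyps(2) in \<open>auto simp: \<beta>'_def\<close>)
  have "(\<Sum>i\<in>insert j I. \<beta>' i * a i) = v * a j + (\<Sum>i\<in>I. u * (\<beta> i * a i))"
    using insert.hyps e1 by (simp add: \<beta>'_def)
  also have "\<dots> = gcd d (a j)" using s uv by (simp add: sum_distrib_left[symmetric] algebra_simps)
  finally have "(\<Sum>i\<in>insert j I. \<beta>' i * a i) = gcd d (a j)" .
  moreover have "\<forall>i\<in>insert j I. gcd d (a j) dvd a i" using d by (auto intro: dvd_trans[OF gcd_dvd1])
  ultimately show ?case by blast
qed

lemma not_coprime_prime:
  fixes x :: int and N :: nat
  assumes "N > 0" "\<not> coprime x (int N)"
  shows "\<exists>q. Factorial_Ring.prime q \<and> int q dvd x \<and> q dvd N"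
proof -
  define g where "g = gcd x (int N)"
  have g0: "g \<noteq> 0" using assms(1) by (simp add: g_def)
  have "g \<noteq> 1" using assms(2) by (simp add: g_def coprime_iff_gcd_eq_1)
  moreover have "g \<ge> 0" by (simp add: g_def)
  ultimately have "\<not> is_unit g" by auto
  then obtain b where b: "b dvd g" "Factorial_Ring.prime b" using prime_divisor_exists g0 by blast
  have "b > 0" using b(2) by (rule prime_gt_0_int)
  then obtain q where q: "b = int q" by (metis pos_int_cases less_imp_le)
  have "Factorial_Ring.prime q" using b(2) q by simp
  moreover have "int q dvd x" using b(1) q by (simp add: g_def)
  moreover have "int q dvd int N" using b(1) q unfolding g_def by (metis dvd_trans gcd_dvd2)
  then have "q dvd N" by simp
  ultimately show ?thesis by blast
qed

lemma choose_c:
  fixes a :: "nat \<Rightarrow> int" and N :: nat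
  assumes k: "0 < k" and N: "0 < N"
    and H: "\<And>p. Factorial_Ring.prime p \<Longrightarrow> p dvd N \<Longrightarrow> \<exists>i<k. \<not> int p dvd a i"
  shows "\<exists>c. c 0 = 1 \<and> coprime (\<Sum>i\<in>{0..<k}. c i * a i) (int N)"
proof -
  obtain \<beta> d where d: "\<forall>i\<in>{1..<k}. d dvd a i" and s: "(\<Sum>i\<in>{1..<k}. \<beta> i * a i) = d"
    using bez_set[of "{1..<k}" a] by auto
  define P where "P = {q \<in> {..N}. Factorial_Ring.prime q \<and> q dvd N \<and> \<not> int q dvd a 0}"
  define M where "M = \<Prod>P"
  have finP: "finite P" by (simp add: P_def)
  define c where "c = (\<lambda>i. if i = 0 then 1 else int M * \<beta> i)"
  have sum: "(\<Sum>i\<in>{0..<k}. c i * a i) = a 0 + int M * d"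
  proof -
    have "{0..<k} = insert 0 {1..<k}" using k by auto
    then have "(\<Sum>i\<in>{0..<k}. c i * a i) = c 0 * a 0 + (\<Sum>i\<in>{1..<k}. c i * a i)" by simp
    also have "(\<Sum>i\<in>{1..<k}. c i * a i) = (\<Sum>i\<in>{1..<k}. int M * (\<beta> i * a i))"
      by (rule sum.cong) (auto simp: c_def)
    finally show ?thesis using s by (simp add: c_def sum_distrib_left[symmetric])
  qed
  have "coprime (a 0 + int M * d) (int N)"
  proof (rule ccontr)
    assume "\<not> coprime (a 0 + int M * d) (int N)"
    then obtain q where q: "Factorial_Ring.prime q" "int q dvd a 0 + int M * d" "q dvd N"
      using not_coprime_prime N by blast
    have qi: "Factorial_Ring.prime (int q)" using q(1) by simp
    show False
    proof (cases "int q dvd a 0")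
      case True
      then obtain i where i: "i < k" "\<not> int q dvd a i" using H q by blast
      then have "i \<noteq> 0" using True by (cases "i = 0") auto
      then have "i \<in> {1..<k}" using i by auto
      then have "d dvd a i" using d by blast
      then have nd: "\<not> int q dvd d" using i(2) dvd_trans by blast
      have nM: "\<not> int q dvd int M"
      proof
        assume "int q dvd int M"
        then have "q dvd M" by simp
        then obtain r where r: "r \<in> P" "q dvd r"
          using prime_dvd_prod_iff[OF finP q(1), of id] by (auto simp: M_def)
        then have "q = r" using q(1) by (intro primes_dvd_imp_eq) (auto simp: P_def)
        then show False using r True by (auto simp: P_def)
      qed
      have "int q dvd int M * d" using q(2) True by (metis dvd_add_right_iff)
      then show False using nd nM prime_dvd_multD[OF qi] by blast
    next
      case False
      have "q \<in> P" using False q N by (auto simp: P_def dest: dvd_imp_le)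
      then have "q dvd M" unfolding M_def using finP by (intro dvd_prodI) auto
      then have "int q dvd int M * d" by simp
      then have "int q dvd a 0" using q(2) by (metis dvd_add_left_iff)
      then show False using False by simp
    qed
  qed
  then show ?thesis using sum by (intro exI[of _ c]) (simp add: c_def)
qed




lemma wsum_lin: "w \<in> words k \<Longrightarrow> wsum c w = (\<Sum>i\<in>{0..<k}. c i * ex w i)"
proof (induction w)
  case Nil then show ?case by simp
next
  case (Cons l w)
  obtain j b where l: "l = (j,b)" by fastforce
  with Cons.prems have j: "j < k" and w: "w \<in> words k" by auto
  define s :: int where "s = (if b then 1 else -1)"
  have "(\<Sum>i\<in>{0..<k}. c i * ex (l#w) i) = (\<Sum>i\<in>{0..<k}. (if j = i then c i * s else 0) + c i * ex w i)"
    by (rule sum.cong) (auto simp: l s_def algebra_simps)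
  also have "\<dots> = c j * s + (\<Sum>i\<in>{0..<k}. c i * ex w i)"
    using j by (simp add: sum.distrib)
  finally show ?case using Cons.IH[OF w] by (simp add: l s_def)
qed

theorem corollary3p6:
  fixes G :: "('a, 'b) monoid_scheme" and k :: nat and w :: "letter list"
  assumes "group G" and "finite (carrier G)" and "nilpotent_class_2 G"
    and "w \<in> words k"
    and "word_map_surjective G k w"
  shows "automorphic G k w gen1
    \<and> (\<forall>x \<in> carrier G. word_prob G k w x = 1 / real (card (carrier G)))
    \<and> (\<forall>x \<in> carrier G. word_prob G k w x \<ge> 1 / real (card (carrier G)))"
proof -
  note grp = assms(1) and fin = assms(2) and w = assms(4)
  from assms(3) obtain x0 y0 where xy: "x0 \<in> carrier G" "y0 \<in> carrier G" "x0 \<otimes>\<^bsub>G\<^esub> y0 \<noteq> y0 \<otimes>\<^bsub>G\<^esub> x0"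
    unfolding nilpotent_class_2_def by blast
  interpret c2 G
    using grp assms(3) unfolding nilpotent_class_2_def by (intro c2.intro c2_axioms.intro) auto
  have surj: "eval_word G w ` tuples G k = carrier G"
    using assms(5) by (simp add: word_map_surjective_def)
  have kpos: "0 < k"
  proof (rule ccontr)
    assume "\<not> 0 < k"
    then have k0: "k = 0" by simp
    then have "w = []" using w by (cases w) (auto simp: words_def)
    then have "carrier G \<subseteq> {\<one>\<^bsub>G\<^esub>}" using surj by auto
    then show False using xy by auto
  qed
  have N: "0 < order G"
    using fin xy(1) by (auto simp: order_def card_gt_0_iff)
  have H: "\<exists>i<k. \<not> int p dvd ex w i" if p: "Factorial_Ring.prime p" "p dvd order G" for p
  proof (rule ccontr)
    assume "\<not> (\<exists>i<k. \<not> int p dvd ex w i)"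
    then have "\<And>i. i < k \<Longrightarrow> int p dvd ex w i" by blast
    from no_p[OF fin w surj p(1) this p(2)] show False .
  qed
  obtain c where c0: "c 0 = 1" and cop0: "coprime (\<Sum>i\<in>{0..<k}. c i * ex w i) (int (order G))"
    using choose_c[OF kpos N H] by blast
  have cop: "coprime (wsum c w) (int (order G))" using cop0 wsum_lin[OF w] by simp
  have aut: "automorphic G k w gen1" by (rule automorphic_w[OF fin kpos w c0 cop])
  have cardpos: "card (carrier G) > 0" using N by (simp add: order_def)
  have prob: "word_prob G k w x = 1 / real (card (carrier G))" if x: "x \<in> carrier G" for x
  proof -
    have "word_prob G k w x = real (card (carrier G) ^ (k - 1)) / real (card (carrier G) ^ k)"
      unfolding word_prob_def using fiber_card[OF fin kpos w c0 cop x] by simp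
    also have "card (carrier G) ^ k = card (carrier G) ^ (k - 1) * card (carrier G)"
      using kpos by (metis Suc_diff_1 power_Suc2)
    finally show ?thesis using cardpos by simp
  qed
  show ?thesis using aut prob by simp
qed


end
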